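(* Let $G$ and $H$ be graphs with $|V(G)|=4$ and $|V(H)|=3$. Then the join $G+H$ is not of class $\mathcal C_0$.
   Context: All graphs are finite, simple and undirected. The join $G+H$ is obtained from vertex-disjoint copies of $G$ and $H$ by adding all edges between $V(G)$ and $V(H)$. A drawing is 1-planar if each edge is crossed at most once (adjacent edges never cross, no edge crosses itself); a graph is 1-planar if it has such a drawing. For a 1-planar drawing $D$, $D^\times$ is the plane graph obtained by turning each crossing into a new degree-4 vertex (a false vertex); $N_{D^\times}(c)$ is the neighbour set of a false vertex $c$. A 1-planar graph is of class $\mathcal C_0$ if it has a 1-planar drawing $D$ with $|N_{D^\times}(c_1)\cap N_{D^\times}(c_2)|=0$ for all distinct false vertices $c_1,c_2$. *)

theory Defs
  imports "HOL-Analysis.Analysis"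
begin

definition simple_graph :: "'a set \<Rightarrow> 'a set set \<Rightarrow> bool" where
  "simple_graph V E \<longleftrightarrow> finite V \<and> (\<forall>e\<in>E. e \<subseteq> V \<and> card e = 2)"

definition join_V :: "'a set \<Rightarrow> 'b set \<Rightarrow> ('a + 'b) set" where
  "join_V VG VH = Inl ` VG \<union> Inr ` VH"

definition join_E :: "'a set \<Rightarrow> 'a set set \<Rightarrow> 'b set \<Rightarrow> 'b set set \<Rightarrow> ('a + 'b) set set" where
  "join_E VG EG VH EH =
     ((`) Inl) ` EG \<union> ((`) Inr) ` EH \<union> {{Inl x, Inr y} | x y. x \<in> VG \<and> y \<in> VH}"

definition edge_int :: "('a set \<Rightarrow> real \<Rightarrow> complex) \<Rightarrow> 'a set \<Rightarrow> complex set" where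
  "edge_int \<Gamma> e = \<Gamma> e ` {0<..<1}"

definition drawing :: "'a set \<Rightarrow> 'a set set \<Rightarrow> ('a \<Rightarrow> complex) \<Rightarrow> ('a set \<Rightarrow> real \<Rightarrow> complex) \<Rightarrow> bool" where
  "drawing V E pos \<Gamma> \<longleftrightarrow> inj_on pos V \<and>
     (\<forall>e\<in>E. arc (\<Gamma> e) \<and> {pathstart (\<Gamma> e), pathfinish (\<Gamma> e)} = pos ` e \<and>
             (\<forall>v\<in>V. pos v \<notin> edge_int \<Gamma> e))"

definition crossings_on :: "'a set set \<Rightarrow> ('a set \<Rightarrow> real \<Rightarrow> complex) \<Rightarrow> 'a set \<Rightarrow> ('a set \<times> complex) set" where
  "crossings_on E \<Gamma> e = {(f, p). f \<in> E \<and> f \<noteq> e \<and> p \<in> edge_int \<Gamma> e \<inter> edge_int \<Gamma> f}"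

definition crosses :: "('a set \<Rightarrow> real \<Rightarrow> complex) \<Rightarrow> 'a set \<Rightarrow> 'a set \<Rightarrow> bool" where
  "crosses \<Gamma> e f \<longleftrightarrow> e \<noteq> f \<and> edge_int \<Gamma> e \<inter> edge_int \<Gamma> f \<noteq> {}"

definition one_planar_drawing :: "'a set \<Rightarrow> 'a set set \<Rightarrow> ('a \<Rightarrow> complex) \<Rightarrow> ('a set \<Rightarrow> real \<Rightarrow> complex) \<Rightarrow> bool" where
  "one_planar_drawing V E pos \<Gamma> \<longleftrightarrow> drawing V E pos \<Gamma> \<and>
     (\<forall>e\<in>E. \<forall>f\<in>E. e \<noteq> f \<and> e \<inter> f \<noteq> {} \<longrightarrow> \<not> crosses \<Gamma> e f) \<and>
     (\<forall>e\<in>E. finite (crossings_on E \<Gamma> e) \<and> card (crossings_on E \<Gamma> e) \<le> 1)"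

text \<open>Class C_0: in D^x a false vertex arising from crossing edges e, f has neighbourhood
  e \<union> f (the four end vertices), since each edge is crossed at most once; distinct
  false vertices correspond to distinct crossing pairs {e,f}.\<close>
definition class_C0 :: "'a set \<Rightarrow> 'a set set \<Rightarrow> bool" where
  "class_C0 V E \<longleftrightarrow> (\<exists>pos \<Gamma>. one_planar_drawing V E pos \<Gamma> \<and>
     (\<forall>e1\<in>E. \<forall>f1\<in>E. \<forall>e2\<in>E. \<forall>f2\<in>E.
        crosses \<Gamma> e1 f1 \<and> crosses \<Gamma> e2 f2 \<and> {e1, f1} \<noteq> {e2, f2} \<longrightarrow>
        (e1 \<union> f1) \<inter> (e2 \<union> f2) = {}))"

end

theory Submission
  imports Defs
begin


lemma side_in:
  fixes S C :: "complex set"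
  assumes "closed S" "connected C" "C \<inter> S = {}" "C \<inter> inside S \<noteq> {}"
  shows "C \<subseteq> inside S"
proof -
  have "inside S \<inter> C = {} \<or> outside S \<inter> C = {}"
    by (rule connectedD[OF assms(2) open_inside[OF assms(1)] open_outside[OF assms(1)]])
       (use assms(3) in auto)
  then show ?thesis using assms(3,4) inside_Un_outside[of S] by blast
qed

lemma side_out:
  fixes S C :: "complex set"
  assumes "closed S" "connected C" "C \<inter> S = {}" "C \<inter> outside S \<noteq> {}"
  shows "C \<subseteq> outside S"
proof -
  have "inside S \<inter> C = {} \<or> outside S \<inter> C = {}"
    by (rule connectedD[OF assms(2) open_inside[OF assms(1)] open_outside[OF assms(1)]])
       (use assms(3) in auto)
  then show ?thesis using assms(3,4) inside_Un_outside[of S] by blast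
qed

lemma cycle_facts:
  fixes g1 g2 :: "real \<Rightarrow> complex"
  assumes "arc g1" "arc g2" "pathstart g1 = x" "pathstart g2 = x"
    "pathfinish g1 = y" "pathfinish g2 = y" "x \<noteq> y"
    "path_image g1 \<inter> path_image g2 = {x,y}"
  shows "connected (inside (path_image g1 \<union> path_image g2))"
    "connected (outside (path_image g1 \<union> path_image g2))"
    "bounded (inside (path_image g1 \<union> path_image g2))"
    "\<not> bounded (outside (path_image g1 \<union> path_image g2))"
    "frontier (inside (path_image g1 \<union> path_image g2)) = path_image g1 \<union> path_image g2"
    "inside (path_image g1 \<union> path_image g2) \<noteq> {}"
    "compact (path_image g1 \<union> path_image g2)"
proof -
  let ?c = "g1 +++ reversepath g2"
  have sp: "simple_path ?c"
    using assms by (auto simp: simple_path_join_loop_eq arc_simple_path simple_path_reversepath arc_reversepath)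
  have lp: "pathfinish ?c = pathstart ?c" using assms by simp
  have pi: "path_image ?c = path_image g1 \<union> path_image g2"
    using assms by (simp add: path_image_join)
  note J = Jordan_inside_outside[OF sp lp, unfolded pi]
  show "connected (inside (path_image g1 \<union> path_image g2))"
    "connected (outside (path_image g1 \<union> path_image g2))"
    "bounded (inside (path_image g1 \<union> path_image g2))"
    "\<not> bounded (outside (path_image g1 \<union> path_image g2))"
    "frontier (inside (path_image g1 \<union> path_image g2)) = path_image g1 \<union> path_image g2"
    "inside (path_image g1 \<union> path_image g2) \<noteq> {}"
    using J by auto
  show "compact (path_image g1 \<union> path_image g2)"
    using assms by (simp add: arc_imp_path compact_Un compact_path_image)
qed

lemma meet_closure:
  fixes S T :: "complex set"
  assumes "z \<in> closure S" "open T" "z \<in> T"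
  shows "S \<inter> T \<noteq> {}"
  using assms open_Int_closure_eq_empty by blast

lemma arc_mid:
  fixes g :: "real \<Rightarrow> complex"
  assumes "arc g"
  shows "g (1/2) \<in> path_image g" "g (1/2) \<noteq> pathstart g" "g (1/2) \<noteq> pathfinish g"
proof -
  have inj: "inj_on g {0..1}" using assms arc_def by blast
  show "g (1/2) \<in> path_image g" by (auto simp: path_image_def)
  show "g (1/2) \<noteq> pathstart g" unfolding pathstart_def
    using inj_onD[OF inj, of "1/2" 0] by auto
  show "g (1/2) \<noteq> pathfinish g" unfolding pathfinish_def
    using inj_onD[OF inj, of "1/2" 1] by auto
qed

lemma theta_some_inside:
  fixes P1 P2 P3 :: "real \<Rightarrow> complex"
  assumes a: "arc P1" "arc P2" "arc P3"
    and s: "pathstart P1 = x" "pathstart P2 = x" "pathstart P3 = x"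
    and f: "pathfinish P1 = y" "pathfinish P2 = y" "pathfinish P3 = y"
    and xy: "x \<noteq> y"
    and i12: "path_image P1 \<inter> path_image P2 = {x,y}"
    and i13: "path_image P1 \<inter> path_image P3 = {x,y}"
    and i23: "path_image P2 \<inter> path_image P3 = {x,y}"
  shows "path_image P3 \<inter> inside (path_image P1 \<union> path_image P2) \<noteq> {} \<or>
         path_image P2 \<inter> inside (path_image P1 \<union> path_image P3) \<noteq> {} \<or>
         path_image P1 \<inter> inside (path_image P2 \<union> path_image P3) \<noteq> {}"
proof (rule ccontr)
  define A1 where "A1 = path_image P1"
  define A2 where "A2 = path_image P2"
  define A3 where "A3 = path_image P3"
  assume "\<not> ?thesis"
  then have h3: "A3 \<inter> inside (A1 \<union> A2) = {}" and h2: "A2 \<inter> inside (A1 \<union> A3) = {}"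
    and h1: "A1 \<inter> inside (A2 \<union> A3) = {}" by (auto simp: A1_def A2_def A3_def)
  note c12 = cycle_facts[OF a(1,2) s(1,2) f(1,2) xy i12, folded A1_def A2_def]
  note c13 = cycle_facts[OF a(1,3) s(1,3) f(1,3) xy i13, folded A1_def A3_def]
  note c23 = cycle_facts[OF a(2,3) s(2,3) f(2,3) xy i23, folded A2_def A3_def]
  have cl12: "closed (A1 \<union> A2)" using c12(7) compact_imp_closed by blast
  have cl13: "closed (A1 \<union> A3)" using c13(7) compact_imp_closed by blast
  have cl23: "closed (A2 \<union> A3)" using c23(7) compact_imp_closed by blast
  have xyA: "x \<in> A1" "y \<in> A1" "x \<in> A2" "y \<in> A2" "x \<in> A3" "y \<in> A3"
    using s f pathstart_in_path_image pathfinish_in_path_image unfolding A1_def A2_def A3_def by metis+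
  define m1 where "m1 = P1 (1/2)"
  define m2 where "m2 = P2 (1/2)"
  define m3 where "m3 = P3 (1/2)"
  have m1: "m1 \<in> A1" "m1 \<noteq> x" "m1 \<noteq> y" using arc_mid[OF a(1)] s f by (auto simp: m1_def A1_def)
  have m2: "m2 \<in> A2" "m2 \<noteq> x" "m2 \<noteq> y" using arc_mid[OF a(2)] s f by (auto simp: m2_def A2_def)
  have m3: "m3 \<in> A3" "m3 \<noteq> x" "m3 \<noteq> y" using arc_mid[OF a(3)] s f by (auto simp: m3_def A3_def)
  have m1o: "m1 \<in> outside (A2 \<union> A3)"
    using m1 h1 i12 i13 inside_Un_outside[of "A2 \<union> A3"] unfolding A1_def A2_def A3_def by blast
  have m2o: "m2 \<in> outside (A1 \<union> A3)"
    using m2 h2 i12 i23 inside_Un_outside[of "A1 \<union> A3"] unfolding A1_def A2_def A3_def by blast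
  have m3o: "m3 \<in> outside (A1 \<union> A2)"
    using m3 h3 i13 i23 inside_Un_outside[of "A1 \<union> A2"] unfolding A1_def A2_def A3_def by blast
  have A1o: "A1 - {x,y} \<subseteq> outside (A2 \<union> A3)"
    using h1 i12 i13 inside_Un_outside[of "A2 \<union> A3"] unfolding A1_def A2_def A3_def by blast
  have U: "inside (A1 \<union> A2) \<subseteq> outside (A2 \<union> A3)"
  proof (rule side_out[OF cl23 c12(1)])
    show "inside (A1 \<union> A2) \<inter> (A2 \<union> A3) = {}"
      using h3 inside_no_overlap[of "A1 \<union> A2"] by blast
    have "m1 \<in> closure (inside (A1 \<union> A2))" using c12(5) m1(1)
      by (metis Un_iff closure_Un_frontier)
    then show "inside (A1 \<union> A2) \<inter> outside (A2 \<union> A3) \<noteq> {}"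
      using meet_closure open_outside[OF cl23] m1o by blast
  qed
  have V: "inside (A1 \<union> A3) \<subseteq> outside (A1 \<union> A2)"
  proof (rule side_out[OF cl12 c13(1)])
    show "inside (A1 \<union> A3) \<inter> (A1 \<union> A2) = {}"
      using h2 inside_no_overlap[of "A1 \<union> A3"] by blast
    have "m3 \<in> closure (inside (A1 \<union> A3))" using c13(5) m3(1)
      by (metis Un_iff closure_Un_frontier)
    then show "inside (A1 \<union> A3) \<inter> outside (A1 \<union> A2) \<noteq> {}"
      using meet_closure open_outside[OF cl12] m3o by blast
  qed
  have W: "inside (A1 \<union> A3) \<subseteq> outside (A2 \<union> A3)"
  proof (rule side_out[OF cl23 c13(1)])
    show "inside (A1 \<union> A3) \<inter> (A2 \<union> A3) = {}"
      using h2 inside_no_overlap[of "A1 \<union> A3"] by blast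
    have "m1 \<in> closure (inside (A1 \<union> A3))" using c13(5) m1(1)
      by (metis Un_iff closure_Un_frontier)
    then show "inside (A1 \<union> A3) \<inter> outside (A2 \<union> A3) \<noteq> {}"
      using meet_closure open_outside[OF cl23] m1o by blast
  qed
  define S where "S = A1 \<union> A2 \<union> inside (A1 \<union> A2)"
  define T where "T = A2 \<union> A3 \<union> inside (A2 \<union> A3)"
  have Seq: "- S = outside (A1 \<union> A2)" unfolding S_def using union_with_inside[of "A1 \<union> A2"] by auto
  have Teq: "- T = outside (A2 \<union> A3)" unfolding T_def using union_with_inside[of "A2 \<union> A3"] by auto
  have cS: "compact S"
  proof -
    have "closed S" using Seq open_outside[OF cl12] by (metis closed_open double_compl)
    moreover have "bounded S" unfolding S_def using c12(3) compact_imp_bounded[OF c12(7)] bounded_Un by metis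
    ultimately show ?thesis using compact_eq_bounded_closed by blast
  qed
  have cT: "compact T"
  proof -
    have "closed T" using Teq open_outside[OF cl23] by (metis closed_open double_compl)
    moreover have "bounded T" unfolding T_def using c23(3) compact_imp_bounded[OF c23(7)] bounded_Un by metis
    ultimately show ?thesis using compact_eq_bounded_closed by blast
  qed
  have ST: "S \<inter> T = A2"
  proof
    show "A2 \<subseteq> S \<inter> T" unfolding S_def T_def by auto
    show "S \<inter> T \<subseteq> A2"
    proof
      fix z assume z: "z \<in> S \<inter> T"
      show "z \<in> A2"
      proof (cases "z \<in> A1")
        case True
        then show ?thesis using z A1o i13 xyA outside_no_overlap[of "A2 \<union> A3"]
          inside_Int_outside[of "A2 \<union> A3"] unfolding T_def A1_def A2_def A3_def by blast
      next
        case False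
        then show ?thesis using z U h3 inside_Int_outside[of "A2 \<union> A3"] unfolding S_def T_def by blast
      qed
    qed
  qed
  have conA2: "connected A2" unfolding A2_def using a(2) arc_imp_path by blast
  have conC: "connected (- (S \<union> T))"
    by (rule Janiszewski_connected[OF cS compact_imp_closed[OF cT]])
       (use ST conA2 Seq Teq c12(2) c23(2) in auto)
  have sub: "inside (A1 \<union> A3) \<subseteq> - (S \<union> T)" using V W Seq Teq by auto
  have "- (S \<union> T) \<subseteq> inside (A1 \<union> A3)"
  proof (rule side_in[OF cl13 conC])
    show "- (S \<union> T) \<inter> (A1 \<union> A3) = {}" unfolding S_def T_def by auto
    show "- (S \<union> T) \<inter> inside (A1 \<union> A3) \<noteq> {}" using sub c13(6) by auto
  qed
  then have "bounded (- (S \<union> T))" using c13(3) bounded_subset by blast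
  moreover have "bounded (S \<union> T)" using cS cT compact_imp_bounded by auto
  ultimately have "bounded (UNIV :: complex set)"
    by (metis Compl_partition bounded_Un)
  then show False by simp
qed

lemma arc_tail:
  fixes Q :: "real \<Rightarrow> complex"
  assumes "arc Q" "path_image Q \<inter> X \<subseteq> {pathfinish Q}"
  shows "connected (Q ` {0..<1})" "pathstart Q \<in> Q ` {0..<1}"
    "pathfinish Q \<in> closure (Q ` {0..<1})" "Q ` {0..<1} \<inter> X = {}"
proof -
  have p: "path Q" using assms arc_imp_path by blast
  have cQ: "continuous_on {0..1} Q" using p path_def by blast
  have inj: "inj_on Q {0..1}" using assms arc_def by blast
  show "connected (Q ` {0..<1})"
    by (rule connected_continuous_image) (auto intro: continuous_on_subset[OF cQ])
  show "pathstart Q \<in> Q ` {0..<1}" by (auto simp: pathstart_def)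
  have "Q ` closure {0..<1} \<subseteq> closure (Q ` {0..<1})"
    by (rule image_closure_subset) (use cQ in \<open>auto intro: closure_subset[THEN subsetD]\<close>)
  then show "pathfinish Q \<in> closure (Q ` {0..<1})" by (auto simp: pathfinish_def)
  show "Q ` {0..<1} \<inter> X = {}"
  proof (rule ccontr)
    assume "Q ` {0..<1} \<inter> X \<noteq> {}"
    then obtain t where t: "0 \<le> t" "t < 1" "Q t \<in> X" by auto
    then have "Q t \<in> path_image Q" by (auto simp: path_image_def)
    with t assms(2) have "Q t = Q 1" by (auto simp: pathfinish_def)
    with inj_onD[OF inj this] t show False by auto
  qed
qed

lemma theta_faces_aux:
  fixes P1 P2 P3 Q1 Q2 Q3 :: "real \<Rightarrow> complex"
  assumes a: "arc P1" "arc P2" "arc P3"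
    and s: "pathstart P1 = x" "pathstart P2 = x" "pathstart P3 = x"
    and f: "pathfinish P1 = y" "pathfinish P2 = y" "pathfinish P3 = y"
    and xy: "x \<noteq> y"
    and i12: "path_image P1 \<inter> path_image P2 = {x,y}"
    and i13: "path_image P1 \<inter> path_image P3 = {x,y}"
    and i23: "path_image P2 \<inter> path_image P3 = {x,y}"
    and ne: "path_image P3 \<inter> inside (path_image P1 \<union> path_image P2) \<noteq> {}"
    and b: "b1 \<in> path_image P1 - {x,y}" "b2 \<in> path_image P2 - {x,y}" "b3 \<in> path_image P3 - {x,y}"
    and qa: "arc Q1" "arc Q2" "arc Q3"
    and qs: "pathstart Q1 = q" "pathstart Q2 = q" "pathstart Q3 = q"
    and qf: "pathfinish Q1 = b1" "pathfinish Q2 = b2" "pathfinish Q3 = b3"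
    and qi1: "path_image Q1 \<inter> (path_image P1 \<union> path_image P2 \<union> path_image P3) = {b1}"
    and qi2: "path_image Q2 \<inter> (path_image P1 \<union> path_image P2 \<union> path_image P3) = {b2}"
    and qi3: "path_image Q3 \<inter> (path_image P1 \<union> path_image P2 \<union> path_image P3) = {b3}"
    and q: "q \<notin> path_image P1 \<union> path_image P2 \<union> path_image P3"
  shows False
proof -
  define A1 where "A1 = path_image P1"
  define A2 where "A2 = path_image P2"
  define A3 where "A3 = path_image P3"
  obtain E1: "inside (A1 \<union> A3) \<inter> inside (A2 \<union> A3) = {}"
     and E2: "inside (A1 \<union> A3) \<union> inside (A2 \<union> A3) \<union> (A3 - {x,y}) = inside (A1 \<union> A2)"
    using split_inside_simple_closed_curve[OF arc_imp_simple_path[OF a(1)] s(1) f(1)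
        arc_imp_simple_path[OF a(2)] s(2) f(2) arc_imp_simple_path[OF a(3)] s(3) f(3) xy i12 i13 i23 ne]
    unfolding A1_def A2_def A3_def by blast
  note c12 = cycle_facts[OF a(1,2) s(1,2) f(1,2) xy i12, folded A1_def A2_def]
  note c13 = cycle_facts[OF a(1,3) s(1,3) f(1,3) xy i13, folded A1_def A3_def]
  note c23 = cycle_facts[OF a(2,3) s(2,3) f(2,3) xy i23, folded A2_def A3_def]
  have cl12: "closed (A1 \<union> A2)" using c12(7) compact_imp_closed by blast
  have cl13: "closed (A1 \<union> A3)" using c13(7) compact_imp_closed by blast
  have cl23: "closed (A2 \<union> A3)" using c23(7) compact_imp_closed by blast
  note t1 = arc_tail[OF qa(1), of "A1 \<union> A2 \<union> A3"]
  note t2 = arc_tail[OF qa(2), of "A1 \<union> A2 \<union> A3"]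
  note t3 = arc_tail[OF qa(3), of "A1 \<union> A2 \<union> A3"]
  have T1: "connected (Q1 ` {0..<1})" "q \<in> Q1 ` {0..<1}" "b1 \<in> closure (Q1 ` {0..<1})"
     "Q1 ` {0..<1} \<inter> (A1 \<union> A2 \<union> A3) = {}"
    using t1 qi1 qs qf unfolding A1_def A2_def A3_def by auto
  have T2: "connected (Q2 ` {0..<1})" "q \<in> Q2 ` {0..<1}" "b2 \<in> closure (Q2 ` {0..<1})"
     "Q2 ` {0..<1} \<inter> (A1 \<union> A2 \<union> A3) = {}"
    using t2 qi2 qs qf unfolding A1_def A2_def A3_def by auto
  have T3: "connected (Q3 ` {0..<1})" "q \<in> Q3 ` {0..<1}" "b3 \<in> closure (Q3 ` {0..<1})"
     "Q3 ` {0..<1} \<inter> (A1 \<union> A2 \<union> A3) = {}"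
    using t3 qi3 qs qf unfolding A1_def A2_def A3_def by auto
  have qA: "q \<notin> A1 \<union> A2 \<union> A3" using q unfolding A1_def A2_def A3_def .
  have bb: "b1 \<in> A1" "b1 \<notin> A2 \<union> A3" "b2 \<in> A2" "b2 \<notin> A1 \<union> A3" "b3 \<in> A3" "b3 \<notin> A1 \<union> A2"
    using b i12 i13 i23 unfolding A1_def A2_def A3_def by blast+
  have "q \<in> inside (A1 \<union> A2) \<or> q \<in> outside (A1 \<union> A2)"
    using qA inside_Un_outside[of "A1 \<union> A2"] by blast
  then show False
  proof
    assume qi: "q \<in> inside (A1 \<union> A2)"
    then have "q \<in> inside (A1 \<union> A3) \<or> q \<in> inside (A2 \<union> A3)"
      using E2 qA by blast
    then show False
    proof
      assume q13: "q \<in> inside (A1 \<union> A3)"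
      have "Q2 ` {0..<1} \<subseteq> inside (A1 \<union> A3)"
        by (rule side_in[OF cl13 T2(1)]) (use T2 q13 in auto)
      then have "b2 \<in> closure (inside (A1 \<union> A3))" using T2(3) closure_mono by blast
      then have "b2 \<in> A1 \<union> A3 \<union> inside (A1 \<union> A3)" using closure_inside_subset[OF cl13] by blast
      moreover have "inside (A1 \<union> A3) \<inter> A2 = {}" using E2 inside_no_overlap[of "A1 \<union> A2"] by blast
      ultimately show False using bb by blast
    next
      assume q23: "q \<in> inside (A2 \<union> A3)"
      have "Q1 ` {0..<1} \<subseteq> inside (A2 \<union> A3)"
        by (rule side_in[OF cl23 T1(1)]) (use T1 q23 in auto)
      then have "b1 \<in> closure (inside (A2 \<union> A3))" using T1(3) closure_mono by blast
      then have "b1 \<in> A2 \<union> A3 \<union> inside (A2 \<union> A3)" using closure_inside_subset[OF cl23] by blast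
      moreover have "inside (A2 \<union> A3) \<inter> A1 = {}" using E2 inside_no_overlap[of "A1 \<union> A2"] by blast
      ultimately show False using bb by blast
    qed
  next
    assume qo: "q \<in> outside (A1 \<union> A2)"
    have "Q3 ` {0..<1} \<subseteq> outside (A1 \<union> A2)"
      by (rule side_out[OF cl12 T3(1)]) (use T3 qo in auto)
    then have "b3 \<in> closure (outside (A1 \<union> A2))" using T3(3) closure_mono by blast
    then have "b3 \<in> A1 \<union> A2 \<union> outside (A1 \<union> A2)" using closure_outside_subset[OF cl12] by blast
    moreover have "b3 \<in> inside (A1 \<union> A2)" using E2 b(3) unfolding A3_def by blast
    ultimately show False using bb inside_Int_outside[of "A1 \<union> A2"] by blast
  qed
qed

lemma theta_faces:
  fixes P1 P2 P3 Q1 Q2 Q3 :: "real \<Rightarrow> complex"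
  assumes a: "arc P1" "arc P2" "arc P3"
    and s: "pathstart P1 = x" "pathstart P2 = x" "pathstart P3 = x"
    and f: "pathfinish P1 = y" "pathfinish P2 = y" "pathfinish P3 = y"
    and xy: "x \<noteq> y"
    and i12: "path_image P1 \<inter> path_image P2 = {x,y}"
    and i13: "path_image P1 \<inter> path_image P3 = {x,y}"
    and i23: "path_image P2 \<inter> path_image P3 = {x,y}"
    and b: "b1 \<in> path_image P1 - {x,y}" "b2 \<in> path_image P2 - {x,y}" "b3 \<in> path_image P3 - {x,y}"
    and qa: "arc Q1" "arc Q2" "arc Q3"
    and qs: "pathstart Q1 = q" "pathstart Q2 = q" "pathstart Q3 = q"
    and qf: "pathfinish Q1 = b1" "pathfinish Q2 = b2" "pathfinish Q3 = b3"
    and qi1: "path_image Q1 \<inter> (path_image P1 \<union> path_image P2 \<union> path_image P3) = {b1}"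
    and qi2: "path_image Q2 \<inter> (path_image P1 \<union> path_image P2 \<union> path_image P3) = {b2}"
    and qi3: "path_image Q3 \<inter> (path_image P1 \<union> path_image P2 \<union> path_image P3) = {b3}"
    and q: "q \<notin> path_image P1 \<union> path_image P2 \<union> path_image P3"
  shows False
proof -
  have i21: "path_image P2 \<inter> path_image P1 = {x,y}" using i12 by blast
  have i31: "path_image P3 \<inter> path_image P1 = {x,y}" using i13 by blast
  have i32: "path_image P3 \<inter> path_image P2 = {x,y}" using i23 by blast
  have U: "path_image P1 \<union> path_image P3 \<union> path_image P2 = path_image P1 \<union> path_image P2 \<union> path_image P3"
    "path_image P2 \<union> path_image P3 \<union> path_image P1 = path_image P1 \<union> path_image P2 \<union> path_image P3"
    by blast+
  from theta_some_inside[OF a s f xy i12 i13 i23] show False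
  proof (elim disjE)
    assume ne: "path_image P3 \<inter> inside (path_image P1 \<union> path_image P2) \<noteq> {}"
    show False by (rule theta_faces_aux[OF a s f xy i12 i13 i23 ne b qa qs qf qi1 qi2 qi3 q])
  next
    assume ne: "path_image P2 \<inter> inside (path_image P1 \<union> path_image P3) \<noteq> {}"
    show False
      by (rule theta_faces_aux[OF a(1,3,2) s(1,3,2) f(1,3,2) xy i13 i12 i32 ne b(1,3,2) qa(1,3,2)
            qs(1,3,2) qf(1,3,2), unfolded U(1)]) (use qi1 qi2 qi3 q in auto)
  next
    assume ne: "path_image P1 \<inter> inside (path_image P2 \<union> path_image P3) \<noteq> {}"
    show False
      by (rule theta_faces_aux[OF a(2,3,1) s(2,3,1) f(2,3,1) xy i23 i21 i31 ne b(2,3,1) qa(2,3,1)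
            qs(2,3,1) qf(2,3,1), unfolded U(2)]) (use qi1 qi2 qi3 q in auto)
  qed
qed

lemma join_rev:
  fixes a1 a2 :: "real \<Rightarrow> complex"
  assumes "arc a1" "arc a2" "pathfinish a1 = w" "pathfinish a2 = w"
    "path_image a1 \<inter> path_image a2 = {w}"
  shows "arc (a1 +++ reversepath a2)" "path_image (a1 +++ reversepath a2) = path_image a1 \<union> path_image a2"
    "pathstart (a1 +++ reversepath a2) = pathstart a1" "pathfinish (a1 +++ reversepath a2) = pathstart a2"
  using assms by (auto simp: arc_join_eq path_image_join arc_reversepath)

lemma K33:
  fixes p qq :: "nat \<Rightarrow> complex" and g :: "nat \<Rightarrow> nat \<Rightarrow> real \<Rightarrow> complex"
  assumes arcs: "\<And>i j. i < 3 \<Longrightarrow> j < 3 \<Longrightarrow> arc (g i j)"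
    and st: "\<And>i j. i < 3 \<Longrightarrow> j < 3 \<Longrightarrow> pathstart (g i j) = p i"
    and fi: "\<And>i j. i < 3 \<Longrightarrow> j < 3 \<Longrightarrow> pathfinish (g i j) = qq j"
    and pd: "p 0 \<noteq> p 1"
    and inter: "\<And>i j k l. i < 3 \<Longrightarrow> j < 3 \<Longrightarrow> k < 3 \<Longrightarrow> l < 3 \<Longrightarrow> (i,j) \<noteq> (k,l) \<Longrightarrow>
       path_image (g i j) \<inter> path_image (g k l) =
         (if i = k then {p i} else {}) \<union> (if j = l then {qq j} else {})"
  shows False
proof -
  define G where "G i j = path_image (g i j)" for i j
  have pq: "p i \<noteq> qq j" if "i < 3" "j < 3" for i j
    using arc_distinct_ends[OF arcs[OF that]] st[OF that] fi[OF that] by auto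
  have inG: "p i \<in> G i j" "qq j \<in> G i j" if "i < 3" "j < 3" for i j
    using st[OF that] fi[OF that] pathstart_in_path_image pathfinish_in_path_image
    unfolding G_def by metis+
  have I: "G i j \<inter> G k l = (if i = k then {p i} else {}) \<union> (if j = l then {qq j} else {})"
    if "i < 3" "j < 3" "k < 3" "l < 3" "(i,j) \<noteq> (k,l)" for i j k l
    using inter[OF that] unfolding G_def .
  define P where "P j = g 0 j +++ reversepath (g 1 j)" for j
  have PP: "arc (P j) \<and> path_image (P j) = G 0 j \<union> G 1 j \<and> pathstart (P j) = p 0 \<and> pathfinish (P j) = p 1"
    if "j < 3" for j
  proof -
    have "G 0 j \<inter> G 1 j = {qq j}" using I[of 0 j 1 j] that by simp
    from join_rev[OF arcs[of 0 j] arcs[of 1 j] fi[of 0 j] fi[of 1 j]] this that st[of 0 j] st[of 1 j]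
    show ?thesis unfolding P_def G_def by auto
  qed
  have PI: "path_image (P j) \<inter> path_image (P k) = {p 0, p 1}" if "j < 3" "k < 3" "j \<noteq> k" for j k
  proof -
    have "G 0 j \<inter> G 0 k = {p 0}" "G 0 j \<inter> G 1 k = {}" "G 1 j \<inter> G 0 k = {}" "G 1 j \<inter> G 1 k = {p 1}"
      using I[of 0 j 0 k] I[of 0 j 1 k] I[of 1 j 0 k] I[of 1 j 1 k] that by auto
    then show ?thesis using PP[OF that(1)] PP[OF that(2)] by auto
  qed
  have TH: "G 0 0 \<union> G 1 0 \<union> (G 0 1 \<union> G 1 1) \<union> (G 0 2 \<union> G 1 2) =
    path_image (P 0) \<union> path_image (P 1) \<union> path_image (P 2)" using PP[of 0] PP[of 1] PP[of 2] by auto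
  have QI: "G 2 j \<inter> (path_image (P 0) \<union> path_image (P 1) \<union> path_image (P 2)) = {qq j}" if "j < 3" for j
  proof -
    have e: "G 2 j \<inter> G i k = (if j = k then {qq j} else {})" if "i < 2" "k < 3" for i k
      using I[of 2 j i k] that \<open>j < 3\<close> by auto
    have "G 2 j \<inter> (G 0 0 \<union> G 1 0 \<union> (G 0 1 \<union> G 1 1) \<union> (G 0 2 \<union> G 1 2)) = {qq j}"
      using that e[of 0 0] e[of 1 0] e[of 0 1] e[of 1 1] e[of 0 2] e[of 1 2] inG[of 2 j]
      by (auto simp: Int_Un_distrib numeral_3_eq_3 less_Suc_eq split: if_splits)
    then show ?thesis using TH by simp
  qed
  have q: "p 2 \<notin> path_image (P 0) \<union> path_image (P 1) \<union> path_image (P 2)"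
    using QI[of 0] inG[of 2 0] pq[of 2 0] by auto
  have b: "qq j \<in> path_image (P j) - {p 0, p 1}" if "j < 3" for j
    using PP[OF that] inG[of 0 j] pq[of 0 j] pq[of 1 j] that by auto
  show False
    by (rule theta_faces[OF conjunct1[OF PP[of 0]] conjunct1[OF PP[of 1]] conjunct1[OF PP[of 2]] _ _ _ _ _ _ pd
        PI[of 0 1] PI[of 0 2] PI[of 1 2] b[of 0] b[of 1] b[of 2] arcs[of 2 0] arcs[of 2 1] arcs[of 2 2]
        st[of 2 0] st[of 2 1] st[of 2 2] fi[of 2 0] fi[of 2 1] fi[of 2 2]
        QI[of 0, unfolded G_def] QI[of 1, unfolded G_def] QI[of 2, unfolded G_def] q])
      (use PP in auto)
qed

definition orient :: "(real \<Rightarrow> complex) \<Rightarrow> complex \<Rightarrow> real \<Rightarrow> complex" where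
  "orient \<gamma> u = (if pathstart \<gamma> = u then \<gamma> else reversepath \<gamma>)"

lemma drawing_edge:
  assumes d: "drawing V E pos \<Gamma>" and e: "{u,v} \<in> E" "u \<noteq> v" "u \<in> V" "v \<in> V"
  shows "arc (orient (\<Gamma> {u,v}) (pos u)) \<and> pathstart (orient (\<Gamma> {u,v}) (pos u)) = pos u \<and>
    pathfinish (orient (\<Gamma> {u,v}) (pos u)) = pos v \<and>
    path_image (orient (\<Gamma> {u,v}) (pos u)) = path_image (\<Gamma> {u,v})"
proof -
  have a: "arc (\<Gamma> {u,v})" and se: "{pathstart (\<Gamma> {u,v}), pathfinish (\<Gamma> {u,v})} = {pos u, pos v}"
    using d e unfolding drawing_def by auto
  have "pos u \<noteq> pos v" using d e unfolding drawing_def inj_on_def by blast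
  moreover have "pathstart (\<Gamma> {u,v}) \<noteq> pathfinish (\<Gamma> {u,v})" using arc_distinct_ends[OF a] by simp
  ultimately show ?thesis using a se
    unfolding orient_def by (auto simp: arc_reversepath doubleton_eq_iff)
qed

lemma arc_image_split:
  fixes g :: "real \<Rightarrow> complex"
  shows "path_image g = g ` {0<..<1} \<union> {pathstart g, pathfinish g}"
proof -
  have "{0..1::real} = {0<..<1} \<union> {0,1}" by auto
  then show ?thesis by (auto simp: path_image_def pathstart_def pathfinish_def)
qed

lemma edge_meet:
  assumes d: "drawing V E pos \<Gamma>" and ef: "e \<in> E" "f \<in> E" "e \<noteq> f" "\<not> crosses \<Gamma> e f"
    "e \<subseteq> V" "f \<subseteq> V"
  shows "path_image (\<Gamma> e) \<inter> path_image (\<Gamma> f) = pos ` (e \<inter> f)"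
proof -
  have ie: "path_image (\<Gamma> e) = edge_int \<Gamma> e \<union> pos ` e"
  proof -
    have "{pathstart (\<Gamma> e), pathfinish (\<Gamma> e)} = pos ` e" using d ef(1) unfolding drawing_def by blast
    then show ?thesis unfolding edge_int_def by (subst arc_image_split) (simp only:)
  qed
  have if': "path_image (\<Gamma> f) = edge_int \<Gamma> f \<union> pos ` f"
  proof -
    have "{pathstart (\<Gamma> f), pathfinish (\<Gamma> f)} = pos ` f" using d ef(2) unfolding drawing_def by blast
    then show ?thesis unfolding edge_int_def by (subst arc_image_split) (simp only:)
  qed
  have ne: "edge_int \<Gamma> e \<inter> edge_int \<Gamma> f = {}" using ef(3,4) unfolding crosses_def by blast
  have "\<forall>v\<in>V. pos v \<notin> edge_int \<Gamma> e" "\<forall>v\<in>V. pos v \<notin> edge_int \<Gamma> f"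
    using d ef(1,2) unfolding drawing_def by blast+
  then have ae: "pos ` V \<inter> edge_int \<Gamma> e = {}" "pos ` V \<inter> edge_int \<Gamma> f = {}" by blast+
  have inj: "inj_on pos V" using d unfolding drawing_def by blast
  have pp: "pos ` e \<inter> pos ` f = pos ` (e \<inter> f)"
  proof
    show "pos ` e \<inter> pos ` f \<subseteq> pos ` (e \<inter> f)"
    proof
      fix z assume "z \<in> pos ` e \<inter> pos ` f"
      then obtain u v where uv: "u \<in> e" "v \<in> f" "z = pos u" "z = pos v" by blast
      then have "u = v" using inj ef(5,6) inj_onD[OF inj, of u v] by blast
      then show "z \<in> pos ` (e \<inter> f)" using uv by blast
    qed
  qed (use IntI in blast)
  have s1: "pos ` e \<subseteq> pos ` V" "pos ` f \<subseteq> pos ` V" using ef(5,6) by blast+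
  have gen: "\<And>A B P Q W :: complex set. A \<inter> B = {} \<Longrightarrow> P \<subseteq> W \<Longrightarrow> Q \<subseteq> W \<Longrightarrow> W \<inter> A = {} \<Longrightarrow>
     W \<inter> B = {} \<Longrightarrow> (A \<union> P) \<inter> (B \<union> Q) = P \<inter> Q" by blast
  show ?thesis unfolding ie if' pp[symmetric] by (rule gen[OF ne s1 ae])
qed



lemma claim_lemma:
  fixes VG :: "'a set" and VH :: "'b set" and E :: "('a + 'b) set set" and \<Gamma> :: "('a + 'b) set \<Rightarrow> real \<Rightarrow> complex"
  assumes c0: "\<forall>e1\<in>E. \<forall>f1\<in>E. \<forall>e2\<in>E. \<forall>f2\<in>E.
        crosses \<Gamma> e1 f1 \<and> crosses \<Gamma> e2 f2 \<and> {e1, f1} \<noteq> {e2, f2} \<longrightarrow>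
        (e1 \<union> f1) \<inter> (e2 \<union> f2) = {}"
    and crd: "\<And>e f. e \<in> E \<Longrightarrow> f \<in> E \<Longrightarrow> crosses \<Gamma> e f \<Longrightarrow> e \<inter> f = {}"
    and bipE: "\<And>a b. a \<in> VG \<Longrightarrow> b \<in> VH \<Longrightarrow> {Inl a, Inr b} \<in> E"
    and c4: "card VG = 4" and c3: "card VH = 3"
  shows "\<exists>a0\<in>VG. \<forall>a\<in>VG-{a0}. \<forall>a'\<in>VG-{a0}. \<forall>b\<in>VH. \<forall>b'\<in>VH.
      \<not> crosses \<Gamma> {Inl a, Inr b} {Inl a', Inr b'}"
proof (cases "\<exists>a1\<in>VG. \<exists>b1\<in>VH. \<exists>a2\<in>VG. \<exists>b2\<in>VH. crosses \<Gamma> {Inl a1, Inr b1} {Inl a2, Inr b2}")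
  case True
  have finH: "finite VH" using c3 card.infinite by fastforce
  from True obtain a1 b1 a2 b2 where h: "a1 \<in> VG" "b1 \<in> VH" "a2 \<in> VG" "b2 \<in> VH"
    "crosses \<Gamma> {Inl a1, Inr b1} {Inl a2, Inr b2}" by blast
  have "\<forall>a\<in>VG-{a1}. \<forall>a'\<in>VG-{a1}. \<forall>b\<in>VH. \<forall>b'\<in>VH. \<not> crosses \<Gamma> {Inl a, Inr b} {Inl a', Inr b'}"
  proof (intro ballI notI)
    fix a a' b b'
    assume hh: "a \<in> VG - {a1}" "a' \<in> VG - {a1}" "b \<in> VH" "b' \<in> VH"
      "crosses \<Gamma> {Inl a, Inr b} {Inl a', Inr b'}"
    have nin: "Inl a1 \<notin> {Inl a, Inr b} \<union> {Inl a', Inr b'}" using hh(1,2) by auto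
    have neq: "{{Inl a1, Inr b1}, {Inl a2, Inr b2}} \<noteq> {{Inl a, Inr b}, {Inl a', Inr b'}}"
    proof
      assume eq: "{{Inl a1, Inr b1}, {Inl a2, Inr b2}} = {{Inl a, Inr b}, {Inl a', Inr b'}}"
      have "Inl a1 \<in> \<Union>{{Inl a1, Inr b1}, {Inl a2, Inr b2}}" by simp
      then have "Inl a1 \<in> \<Union>{{Inl a, Inr b}, {Inl a', Inr b'}}" by (simp only: eq)
      then show False using nin by simp
    qed
    have aa: "a \<in> VG" "a' \<in> VG" using hh(1,2) by simp_all
    have dj: "({Inl a1, Inr b1} \<union> {Inl a2, Inr b2}) \<inter> ({Inl a, Inr b} \<union> {Inl a', Inr b'}) = {}"
      by (rule c0[rule_format, OF bipE[OF h(1,2)] bipE[OF h(3,4)] bipE[OF aa(1) hh(3)] bipE[OF aa(2) hh(4)]])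
         (intro conjI h(5) hh(5) neq)
    have "b1 \<noteq> b2" using crd[OF bipE[OF h(1,2)] bipE[OF h(3,4)] h(5)] by auto
    moreover have "b \<noteq> b'" using crd[OF bipE[OF aa(1) hh(3)] bipE[OF aa(2) hh(4)] hh(5)] by auto
    moreover have "b1 \<noteq> b" "b1 \<noteq> b'" "b2 \<noteq> b" "b2 \<noteq> b'" using dj by auto
    ultimately have "card {b1, b2, b, b'} = 4" by simp
    moreover have "card {b1, b2, b, b'} \<le> card VH" by (rule card_mono[OF finH]) (use h hh in auto)
    ultimately show False using c3 by simp
  qed
  then show ?thesis using h(1) by blast
next
  case False
  have "VG \<noteq> {}" using c4 by auto
  then obtain a0 where "a0 \<in> VG" by blast
  then show ?thesis using False by blast
qed


theorem lemma10:
  fixes VG :: "'a set" and EG :: "'a set set" and VH :: "'b set" and EH :: "'b set set"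
  assumes "simple_graph VG EG" and "simple_graph VH EH"
    and "card VG = 4" and "card VH = 3"
  shows "\<not> class_C0 (join_V VG VH) (join_E VG EG VH EH)"
proof
  define V where "V = join_V VG VH"
  define E where "E = join_E VG EG VH EH"
  assume "class_C0 (join_V VG VH) (join_E VG EG VH EH)"
  then obtain pos \<Gamma> where opd: "one_planar_drawing V E pos \<Gamma>"
    and c0: "\<forall>e1\<in>E. \<forall>f1\<in>E. \<forall>e2\<in>E. \<forall>f2\<in>E.
        crosses \<Gamma> e1 f1 \<and> crosses \<Gamma> e2 f2 \<and> {e1, f1} \<noteq> {e2, f2} \<longrightarrow>
        (e1 \<union> f1) \<inter> (e2 \<union> f2) = {}"
    unfolding class_C0_def V_def[symmetric] E_def[symmetric] by blast
  have d: "drawing V E pos \<Gamma>" using opd one_planar_drawing_def by blast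
  have crd: "e \<inter> f = {}" if "e \<in> E" "f \<in> E" "crosses \<Gamma> e f" for e f
    using opd that unfolding one_planar_drawing_def crosses_def by blast
  have bipE: "{Inl a, Inr b} \<in> E" if "a \<in> VG" "b \<in> VH" for a b
    using that unfolding E_def join_E_def by blast
  have bipV: "{Inl a, Inr b} \<subseteq> V" if "a \<in> VG" "b \<in> VH" for a b
    using that unfolding V_def join_V_def by blast
  have finH: "finite VH" using assms(4) card.infinite by fastforce
  have claim: "\<exists>a0\<in>VG. \<forall>a\<in>VG-{a0}. \<forall>a'\<in>VG-{a0}. \<forall>b\<in>VH. \<forall>b'\<in>VH.
      \<not> crosses \<Gamma> {Inl a, Inr b} {Inl a', Inr b'}"
    by (rule claim_lemma[OF c0 crd bipE assms(3,4)])
  then obtain a0 where a0: "a0 \<in> VG" and nc: "\<And>a a' b b'. a\<in>VG-{a0} \<Longrightarrow> a'\<in>VG-{a0} \<Longrightarrow> b\<in>VH \<Longrightarrow> b'\<in>VH \<Longrightarrow>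
      \<not> crosses \<Gamma> {Inl a, Inr b} {Inl a', Inr b'}" by blast
  have "card (VG - {a0}) = 3" using assms(3) a0 by (simp add: card_Diff_singleton)
  then obtain x1 x2 x3 where X: "VG - {a0} = {x1,x2,x3}" "x1 \<noteq> x2" "x2 \<noteq> x3" "x1 \<noteq> x3"
    by (auto simp: card_3_iff)
  obtain y1 y2 y3 where Y: "VH = {y1,y2,y3}" "y1 \<noteq> y2" "y2 \<noteq> y3" "y1 \<noteq> y3"
    using assms(4) by (auto simp: card_3_iff)
  define aa where "aa i = (if i = 0 then x1 else if i = 1 then x2 else x3)" for i :: nat
  define bb where "bb i = (if i = 0 then y1 else if i = 1 then y2 else y3)" for i :: nat
  have aaS: "aa i \<in> VG - {a0}" for i unfolding aa_def using X by auto
  have bbS: "bb i \<in> VH" for i unfolding bb_def using Y by auto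
  have aainj: "aa i = aa k \<longleftrightarrow> i = k" if "i < 3" "k < 3" for i k
    using that X unfolding aa_def by (auto simp: numeral_3_eq_3 less_Suc_eq)
  have bbinj: "bb i = bb k \<longleftrightarrow> i = k" if "i < 3" "k < 3" for i k
    using that Y unfolding bb_def by (auto simp: numeral_3_eq_3 less_Suc_eq)
  define p where "p i = pos (Inl (aa i))" for i
  define qq where "qq j = pos (Inr (bb j))" for j
  define g where "g i j = orient (\<Gamma> {Inl (aa i), Inr (bb j)}) (p i)" for i j
  have DE: "arc (g i j) \<and> pathstart (g i j) = p i \<and> pathfinish (g i j) = qq j \<and>
     path_image (g i j) = path_image (\<Gamma> {Inl (aa i), Inr (bb j)})" for i j
  proof -
    have 1: "{Inl (aa i), Inr (bb j)} \<in> E" using bipE aaS bbS by blast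
    have 2: "Inl (aa i) \<in> V" "Inr (bb j) \<in> V" using bipV aaS bbS by blast+
    show ?thesis using drawing_edge[OF d 1 _ 2] unfolding g_def p_def qq_def by simp
  qed
  show False
  proof (rule K33[of g p qq])
    show "arc (g i j)" "pathstart (g i j) = p i" "pathfinish (g i j) = qq j" for i j using DE by auto
    show "p 0 \<noteq> p 1" using d aainj[of 0 1] aaS[of 0] aaS[of 1] unfolding drawing_def inj_on_def p_def V_def join_V_def
      by auto
    fix i j k l :: nat
    assume ijkl: "i < 3" "j < 3" "k < 3" "l < 3" "(i, j) \<noteq> (k, l)"
    have ne: "{Inl (aa i), Inr (bb j)} \<noteq> {Inl (aa k), Inr (bb l)}"
      using ijkl aainj bbinj by (auto simp: doubleton_eq_iff)
    have E1: "{Inl (aa i), Inr (bb j)} \<in> E" "{Inl (aa k), Inr (bb l)} \<in> E" using bipE aaS bbS by blast+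
    have V1: "{Inl (aa i), Inr (bb j)} \<subseteq> V" "{Inl (aa k), Inr (bb l)} \<subseteq> V" using bipV aaS bbS by blast+
    have "path_image (g i j) \<inter> path_image (g k l) = pos ` ({Inl (aa i), Inr (bb j)} \<inter> {Inl (aa k), Inr (bb l)})"
      using edge_meet[OF d E1 ne nc[OF aaS aaS bbS bbS] V1] DE[of i j] DE[of k l] by simp
    also have "{Inl (aa i), Inr (bb j)} \<inter> {Inl (aa k), Inr (bb l)} =
        (if i = k then {Inl (aa i)} else {}) \<union> (if j = l then {Inr (bb j)} else {})"
      using aainj[OF ijkl(1,3)] bbinj[OF ijkl(2,4)] by auto
    also have "pos ` \<dots> = (if i = k then {p i} else {}) \<union> (if j = l then {qq j} else {})"
      unfolding p_def qq_def by simp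
    finally show "path_image (g i j) \<inter> path_image (g k l) =
        (if i = k then {p i} else {}) \<union> (if j = l then {qq j} else {})" .
  qed
qed

end
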